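(* Let $E$ be a real Banach space which is uniformly convex with modulus of convexity $\delta_E$. Then for all $\varepsilon,\eta$ with $0<\varepsilon/2<\eta<\varepsilon<2$, $$\frac{\delta_E(\eta)}{\eta}\le \frac{\delta_E(\varepsilon)}{\varepsilon}-2\,\frac{\varepsilon-\eta}{\varepsilon\,\eta}\,\delta_E(r(\varepsilon)),\qquad\text{where } r(\varepsilon)=\frac14\left(\frac{\varepsilon}{2}-\delta_E(\varepsilon)\right).$$
   Context: $B_r(a)=\{x\in E:\|x-a\|\le r\}$. For a closed convex set $A\subset E$ its modulus of convexity is $\delta_A(\varepsilon)=\sup\{\delta\ge 0:\ B_\delta(\frac{x_1+x_2}{2})\subset A \text{ for all } x_1,x_2\in A \text{ with } \|x_1-x_2\|=\varepsilon\}$, $\varepsilon\in[0,\operatorname{diam}A)$. The modulus of convexity of the space is $\delta_E=\delta_{B_1(0)}$, defined on $[0,2)$, and $E$ is uniformly convex if $\delta_E(\varepsilon)>0$ for all $\varepsilon\in(0,2)$. *)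

theory Defs
  imports "HOL-Analysis.Analysis"
begin

definition modulus_convexity :: "'a::real_normed_vector set \<Rightarrow> real \<Rightarrow> real" where
  "modulus_convexity A \<epsilon> = Sup {\<delta>. \<delta> \<ge> 0 \<and>
     (\<forall>x1\<in>A. \<forall>x2\<in>A. norm (x1 - x2) = \<epsilon> \<longrightarrow> cball ((1/2) *\<^sub>R (x1 + x2)) \<delta> \<subseteq> A)}"

definition modulus_space :: "'a::real_normed_vector itself \<Rightarrow> real \<Rightarrow> real" where
  "modulus_space _ \<epsilon> = modulus_convexity (cball (0::'a) 1) \<epsilon>"

definition uniformly_convex :: "'a::real_normed_vector itself \<Rightarrow> bool" where
  "uniformly_convex T \<longleftrightarrow> (\<forall>\<epsilon>. 0 < \<epsilon> \<and> \<epsilon> < 2 \<longrightarrow> modulus_space T \<epsilon> > 0)"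

end

theory Submission
  imports Defs
begin

lemma unit_exists:
  assumes "\<exists>x::'a::real_normed_vector. x \<noteq> 0"
  obtains w :: "'a::real_normed_vector" where "norm w = 1"
  using assms by (metis norm_sgn)

lemma ball_sub:
  fixes c :: "'a::real_normed_vector"
  assumes nt: "\<exists>x::'a. x \<noteq> 0" and sub: "cball c t \<subseteq> cball 0 1" and t: "t \<ge> 0"
  shows "norm c + t \<le> 1"
proof -
  obtain w :: 'a where w: "norm w = 1" using unit_exists[OF nt] by blast
  define v where "v = (if c = 0 then w else sgn c)"
  have nv: "norm v = 1" using w by (simp add: v_def norm_sgn)
  have cv: "c = norm c *\<^sub>R v"
    by (simp add: v_def sgn_div_norm)
  have "c + t *\<^sub>R v = (norm c + t) *\<^sub>R v"
    using cv by (metis scaleR_left_distrib)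
  hence nn: "norm (c + t *\<^sub>R v) = norm c + t" using nv t by simp
  have "c + t *\<^sub>R v \<in> cball c t" using nv t by (simp add: dist_norm)
  hence "c + t *\<^sub>R v \<in> cball 0 1" using sub by blast
  thus ?thesis using nn by simp
qed

lemma mid_norm_le:
  fixes x y :: "'a::real_normed_vector"
  assumes "norm x \<le> 1" "norm y \<le> 1"
  shows "norm ((1/2) *\<^sub>R (x + y)) \<le> 1"
proof -
  have "norm ((1/2) *\<^sub>R (x + y)) = (1/2) * norm (x + y)" by simp
  also have "\<dots> \<le> (1/2) * (norm x + norm y)" using norm_triangle_ineq[of x y] by simp
  finally show ?thesis using assms by simp
qed

lemma S_bound:
  fixes x y :: "'a::real_normed_vector"
  assumes nt: "\<exists>x::'a. x \<noteq> 0" and x: "norm x \<le> 1" and y: "norm y \<le> 1"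
    and e: "norm (x - y) = e"
    and d: "d \<in> {\<delta>. \<delta> \<ge> 0 \<and> (\<forall>x1\<in>cball (0::'a) 1. \<forall>x2\<in>cball 0 1. norm (x1 - x2) = e
              \<longrightarrow> cball ((1/2) *\<^sub>R (x1 + x2)) \<delta> \<subseteq> cball 0 1)}"
  shows "d \<le> 1 - norm ((1/2) *\<^sub>R (x + y))"
proof -
  have "d \<ge> 0" "cball ((1/2) *\<^sub>R (x + y)) d \<subseteq> cball 0 1"
    using d x y e by auto
  thus ?thesis using ball_sub[OF nt] by fastforce
qed

lemma zero_in_S:
  "(0::real) \<in> {\<delta>. \<delta> \<ge> 0 \<and> (\<forall>x1\<in>cball (0::'a::real_normed_vector) 1. \<forall>x2\<in>cball 0 1. norm (x1 - x2) = e
              \<longrightarrow> cball ((1/2) *\<^sub>R (x1 + x2)) \<delta> \<subseteq> cball 0 1)}"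
  using mid_norm_le by auto

lemma lemA:
  fixes x y :: "'a::real_normed_vector"
  assumes nt: "\<exists>x::'a. x \<noteq> 0" and x: "norm x \<le> 1" and y: "norm y \<le> 1"
    and e: "norm (x - y) = e"
  shows "norm ((1/2) *\<^sub>R (x + y)) + modulus_space TYPE('a) e \<le> 1"
proof -
  have "modulus_space TYPE('a) e \<le> 1 - norm ((1/2) *\<^sub>R (x + y))"
    unfolding modulus_space_def modulus_convexity_def
    apply (rule cSup_least)
    using zero_in_S apply blast
    using S_bound[OF nt x y e] by blast
  thus ?thesis by simp
qed

lemma pair_exists:
  assumes nt: "\<exists>x::'a::real_normed_vector. x \<noteq> 0" and e: "0 \<le> e" "e \<le> 2"
  shows "\<exists>x y::'a. norm x \<le> 1 \<and> norm y \<le> 1 \<and> norm (x - y) = e"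
proof -
  obtain w :: 'a where w: "norm w = 1" using unit_exists[OF nt] by blast
  have "(e/2) *\<^sub>R w - (- (e/2) *\<^sub>R w) = e *\<^sub>R w"
    by (metis add_diff_cancel diff_add_cancel field_sum_of_halves scaleR_left_distrib
        scaleR_minus_left diff_minus_eq_add)
  hence "norm ((e/2) *\<^sub>R w - (- (e/2) *\<^sub>R w)) = e" using w e by simp
  moreover have "norm ((e/2) *\<^sub>R w) \<le> 1" "norm (- (e/2) *\<^sub>R w) \<le> 1" using w e by auto
  ultimately show ?thesis by blast
qed

lemma bdd_S:
  assumes nt: "\<exists>x::'a::real_normed_vector. x \<noteq> 0" and e: "0 \<le> e" "e \<le> 2"
  shows "bdd_above {\<delta>. \<delta> \<ge> 0 \<and> (\<forall>x1\<in>cball (0::'a) 1. \<forall>x2\<in>cball 0 1. norm (x1 - x2) = e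
              \<longrightarrow> cball ((1/2) *\<^sub>R (x1 + x2)) \<delta> \<subseteq> cball 0 1)}"
proof -
  obtain x y :: 'a where xy: "norm x \<le> 1" "norm y \<le> 1" "norm (x - y) = e"
    using pair_exists[OF nt e] by blast
  show ?thesis
    apply (rule bdd_aboveI[where M = "1 - norm ((1/2) *\<^sub>R (x + y))"])
    using S_bound[OF nt xy] by blast
qed

lemma nonneg:
  assumes nt: "\<exists>x::'a::real_normed_vector. x \<noteq> 0" and e: "0 \<le> e" "e \<le> 2"
  shows "modulus_space TYPE('a) e \<ge> 0"
  unfolding modulus_space_def modulus_convexity_def
  by (rule cSup_upper[OF zero_in_S bdd_S[OF nt e]])

lemma lemB:
  assumes nt: "\<exists>x::'a::real_normed_vector. x \<noteq> 0" and e: "0 \<le> e" "e \<le> 2" and xi: "\<xi> > 0"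
  shows "\<exists>x y::'a. norm x \<le> 1 \<and> norm y \<le> 1 \<and> norm (x - y) = e \<and>
            1 - norm ((1/2) *\<^sub>R (x + y)) < modulus_space TYPE('a) e + \<xi>"
proof (rule ccontr)
  assume H: "\<not> ?thesis"
  let ?D = "modulus_space TYPE('a) e"
  have mem: "?D + \<xi> \<in> {\<delta>. \<delta> \<ge> 0 \<and> (\<forall>x1\<in>cball (0::'a) 1. \<forall>x2\<in>cball 0 1. norm (x1 - x2) = e
              \<longrightarrow> cball ((1/2) *\<^sub>R (x1 + x2)) \<delta> \<subseteq> cball 0 1)}"
  proof (clarsimp, intro conjI ballI impI subsetI)
    show "0 \<le> ?D + \<xi>" using nonneg[OF nt e] xi by simp
  next
    fix x1 x2 z :: 'a
    assume a: "x1 \<in> cball 0 1" "x2 \<in> cball 0 1" "norm (x1 - x2) = e"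
      "z \<in> cball ((1/2) *\<^sub>R (x1 + x2)) (?D + \<xi>)"
    have "\<not> (1 - norm ((1/2) *\<^sub>R (x1 + x2)) < ?D + \<xi>)" using H a(1-3) by auto
    hence "1 - norm ((1/2) *\<^sub>R (x1 + x2)) \<ge> ?D + \<xi>" by linarith
    moreover have "norm z \<le> norm ((1/2) *\<^sub>R (x1 + x2)) + dist ((1/2) *\<^sub>R (x1 + x2)) z"
      by (metis dist_norm norm_minus_commute norm_triangle_sub)
    ultimately show "z \<in> cball 0 1" using a(4) by simp
  qed
  have "?D + \<xi> \<le> ?D"
    unfolding modulus_space_def modulus_convexity_def
    apply (rule cSup_upper[OF _ bdd_S[OF nt e]])
    using mem unfolding modulus_space_def modulus_convexity_def by simp
  thus False using xi by simp
qed


lemma half: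
  assumes nt: "\<exists>x::'a::real_normed_vector. x \<noteq> 0" and e: "0 \<le> e" "e \<le> 2"
  shows "modulus_space TYPE('a) e \<le> e / 2"
proof -
  obtain w :: 'a where w: "norm w = 1" using unit_exists[OF nt] by blast
  have d: "w - (1 - e) *\<^sub>R w = e *\<^sub>R w" by (simp add: algebra_simps)
  have m: "(1/2) *\<^sub>R (w + (1 - e) *\<^sub>R w) = (1 - e/2) *\<^sub>R w" by (simp add: algebra_simps flip: scaleR_add_left)
  have nm: "norm ((1/2) *\<^sub>R (w + (1 - e) *\<^sub>R w)) = 1 - e/2"
    unfolding m using w e by simp
  have "norm ((1 - e) *\<^sub>R w) \<le> 1" using w e by simp
  moreover have "norm (w - (1 - e) *\<^sub>R w) = e" using d w e by simp
  ultimately have "norm ((1/2) *\<^sub>R (w + (1 - e) *\<^sub>R w)) + modulus_space TYPE('a) e \<le> 1"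
    using lemA[OF nt, of w "(1 - e) *\<^sub>R w" e] w by simp
  thus ?thesis using nm by linarith
qed

lemma conv:
  fixes x y :: "'a::real_normed_vector"
  assumes nt: "\<exists>x::'a. x \<noteq> 0" and x: "norm x \<le> 1" and y: "norm y \<le> 1"
    and d: "norm (x - y) = d" and l: "1/2 \<le> l" "l \<le> 1"
  shows "norm (l *\<^sub>R x + (1 - l) *\<^sub>R y) \<le> 1 - 2 * (1 - l) * modulus_space TYPE('a) d"
proof -
  have eq: "l *\<^sub>R x + (1 - l) *\<^sub>R y = (2*l - 1) *\<^sub>R x + (2 - 2*l) *\<^sub>R ((1/2) *\<^sub>R (x + y))"
    by (simp add: algebra_simps flip: scaleR_add_left)
  have A: "norm ((1/2) *\<^sub>R (x + y)) \<le> 1 - modulus_space TYPE('a) d"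
    using lemA[OF nt x y d] by simp
  have "norm (l *\<^sub>R x + (1 - l) *\<^sub>R y) \<le> (2*l - 1) * norm x + (2 - 2*l) * norm ((1/2) *\<^sub>R (x + y))"
    unfolding eq using norm_triangle_ineq[of "(2*l - 1) *\<^sub>R x" "(2 - 2*l) *\<^sub>R ((1/2) *\<^sub>R (x + y))"] l
    by simp
  also have "\<dots> \<le> (2*l - 1) * 1 + (2 - 2*l) * (1 - modulus_space TYPE('a) d)"
    apply (rule add_mono)
    using x l apply (simp add: mult_left_le)
    using A l by (intro mult_left_mono) auto
  finally show ?thesis by (simp add: algebra_simps)
qed

lemma core:
  fixes x1 x2 m :: "'a::real_normed_vector"
  assumes nt: "\<exists>x::'a. x \<noteq> 0" and x1: "norm x1 \<le> 1" and x2: "norm x2 \<le> 1"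
    and e: "norm (x1 - x2) = e" and m: "m = (1/2) *\<^sub>R (x1 + x2)" and mp: "norm m > 0"
    and l: "0 < l" "l \<le> 1" and k: "k \<ge> 0"
    and b1: "norm (l *\<^sub>R x1 + (1 - l) *\<^sub>R sgn m) \<le> 1 - k"
    and b2: "norm (l *\<^sub>R x2 + (1 - l) *\<^sub>R sgn m) \<le> 1 - k"
  shows "modulus_space TYPE('a) (l * e) \<le> l * (1 - norm m) - k"
proof -
  define y1 where "y1 = l *\<^sub>R x1 + (1 - l + k) *\<^sub>R sgn m"
  define y2 where "y2 = l *\<^sub>R x2 + (1 - l + k) *\<^sub>R sgn m"
  have ns: "norm (sgn m) = 1" using mp by (simp add: norm_sgn)
  have "y1 = (l *\<^sub>R x1 + (1 - l) *\<^sub>R sgn m) + k *\<^sub>R sgn m" unfolding y1_def by (simp add: algebra_simps)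
  hence n1: "norm y1 \<le> 1" using norm_triangle_ineq[of "l *\<^sub>R x1 + (1 - l) *\<^sub>R sgn m" "k *\<^sub>R sgn m"] b1 ns k
    by simp
  have "y2 = (l *\<^sub>R x2 + (1 - l) *\<^sub>R sgn m) + k *\<^sub>R sgn m" unfolding y2_def by (simp add: algebra_simps)
  hence n2: "norm y2 \<le> 1" using norm_triangle_ineq[of "l *\<^sub>R x2 + (1 - l) *\<^sub>R sgn m" "k *\<^sub>R sgn m"] b2 ns k
    by simp
  have "y1 - y2 = l *\<^sub>R (x1 - x2)" unfolding y1_def y2_def by (simp add: algebra_simps)
  hence d: "norm (y1 - y2) = l * e" using e l by simp
  have mm: "m = norm m *\<^sub>R sgn m" using mp by (simp add: sgn_div_norm)
  have "(1/2) *\<^sub>R (y1 + y2) = l *\<^sub>R m + (1 - l + k) *\<^sub>R sgn m"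
    unfolding y1_def y2_def m by (simp add: algebra_simps flip: scaleR_add_left)
  also have "\<dots> = (l * norm m + (1 - l + k)) *\<^sub>R sgn m"
    by (subst mm) (simp add: algebra_simps)
  finally have "norm ((1/2) *\<^sub>R (y1 + y2)) = l * norm m + (1 - l + k)"
    using ns l k mp by simp
  moreover have "norm ((1/2) *\<^sub>R (y1 + y2)) + modulus_space TYPE('a) (l * e) \<le> 1"
    by (rule lemA[OF nt n1 n2 d])
  ultimately show ?thesis by (simp add: algebra_simps)
qed

lemma mono:
  assumes nt: "\<exists>x::'a::real_normed_vector. x \<noteq> 0" and r: "0 \<le> r" "r \<le> d" "d \<le> 2"
  shows "modulus_space TYPE('a) r \<le> modulus_space TYPE('a) d"
proof (cases "r = 0")
  case True
  then show ?thesis using half[OF nt, of 0] nonneg[OF nt, of d] r by simp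
next
  case rp: False
  let ?Dd = "modulus_space TYPE('a) d"
  show ?thesis
  proof (cases "?Dd < 1")
    case False
    then show ?thesis using half[OF nt, of r] r by simp
  next
    case True
    have Dd: "?Dd < 1" using True .
    show ?thesis
    proof (rule field_le_epsilon)
      fix \<xi> :: real assume xi: "\<xi> > 0"
      define z where "z = min \<xi> ((1 - ?Dd)/2)"
      have z0: "z \<le> (1 - ?Dd)/2" "z \<le> \<xi>" unfolding z_def by (rule min.cobounded2, rule min.cobounded1)
      have z: "z > 0" "z \<le> \<xi>" "?Dd + z < 1" using xi Dd z0 by (auto simp: z_def min_def)
      obtain x y :: 'a where xy: "norm x \<le> 1" "norm y \<le> 1" "norm (x - y) = d"
        "1 - norm ((1/2) *\<^sub>R (x + y)) < ?Dd + z"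
        using lemB[OF nt _ _ z(1), of d] r by auto
      define m where "m = (1/2) *\<^sub>R (x + y)"
      have mp: "norm m > 0" using xy(4) z unfolding m_def by linarith
      have dp: "d > 0" using r rp by simp
      have lm: "norm (l *\<^sub>R v + (1 - l) *\<^sub>R sgn m) \<le> 1" if "norm v \<le> 1" "0 \<le> l" "l \<le> 1" for v l
      proof -
        have "norm (l *\<^sub>R v + (1 - l) *\<^sub>R sgn m) \<le> l * norm v + (1 - l) * norm (sgn m)"
          using norm_triangle_ineq[of "l *\<^sub>R v" "(1 - l) *\<^sub>R sgn m"] that by simp
        also have "\<dots> \<le> l * 1 + (1 - l) * 1"
          using that mp by (intro add_mono mult_left_mono) (auto simp: norm_sgn)
        finally show ?thesis by simp
      qed
      have "modulus_space TYPE('a) ((r/d) * d) \<le> (r/d) * (1 - norm m) - 0"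
        apply (rule core[OF nt xy(1,2,3) m_def mp])
        using r dp rp by (auto intro!: lm xy simp: divide_le_eq_1)
      moreover have "(r/d) * (1 - norm m) \<le> 1 - norm m"
        using r dp mp xy(1,2) mid_norm_le[OF xy(1,2)] unfolding m_def
        by (intro mult_left_le_one_le) auto
      ultimately show "modulus_space TYPE('a) r \<le> ?Dd + \<xi>"
        using dp xy(4) z unfolding m_def by simp
    qed
  qed
qed


theorem lemma1p2:
  assumes nontriv: "\<exists>x::'a::banach. x \<noteq> 0"
    and uc: "uniformly_convex TYPE('a)"
    and h1: "0 < \<epsilon> / 2" and h2: "\<epsilon> / 2 < \<eta>" and h3: "\<eta> < \<epsilon>" and h4: "\<epsilon> < 2"
  shows "modulus_space TYPE('a) \<eta> / \<eta> \<le>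
           modulus_space TYPE('a) \<epsilon> / \<epsilon>
           - 2 * ((\<epsilon> - \<eta>) / (\<epsilon> * \<eta>))
               * modulus_space TYPE('a) ((1/4) * (\<epsilon> / 2 - modulus_space TYPE('a) \<epsilon>))"
proof (rule field_le_epsilon)
  fix \<xi>' :: real assume xi': "\<xi>' > 0"
  let ?D = "modulus_space TYPE('a)"
  let ?De = "?D \<epsilon>"
  define g where "g = \<epsilon> / 2 - ?De"
  define r where "r = (1/4) * (\<epsilon> / 2 - ?De)"
  define l where "l = \<eta> / \<epsilon>"
  have ep: "\<epsilon> > 0" "\<eta> > 0" using h1 h2 by auto
  have De: "?De \<le> \<epsilon>/2" "?De \<ge> 0" using half[OF nontriv, of \<epsilon>] nonneg[OF nontriv, of \<epsilon>] ep h4 by auto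
  have g0: "g \<ge> 0" using De g_def by simp
  have r0: "0 \<le> r" "r \<le> 2" using De h4 unfolding r_def by auto
  have l: "1/2 \<le> l" "l \<le> 1" "0 < l" using h2 h3 ep unfolding l_def by (auto simp: field_simps)
  have le: "l * \<epsilon> = \<eta>" using ep unfolding l_def by simp
  define \<xi> where "\<xi> = min (\<epsilon> * \<xi>') (min ((1 - ?De)/2) (if g > 0 then 3*g/4 else 1))"
  have xi1: "\<xi> \<le> \<epsilon> * \<xi>'" "\<xi> \<le> (1 - ?De)/2" "\<xi> \<le> (if g > 0 then 3*g/4 else 1)"
    unfolding \<xi>_def by linarith+
  have xi0: "\<xi> > 0" using xi' ep De h4 g0 unfolding \<xi>_def by auto
  obtain x1 x2 :: 'a where xy: "norm x1 \<le> 1" "norm x2 \<le> 1" "norm (x1 - x2) = \<epsilon>"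
        "1 - norm ((1/2) *\<^sub>R (x1 + x2)) < ?De + \<xi>"
    using lemB[OF nontriv _ _ xi0, of \<epsilon>] ep h4 by auto
  define m where "m = (1/2) *\<^sub>R (x1 + x2)"
  have mle: "norm m \<le> 1" unfolding m_def by (rule mid_norm_le[OF xy(1,2)])
  have "?De + \<xi> < 1" using xi1(2) De(1) h4 by argo
  hence mp: "norm m > 0" using xy(4) unfolding m_def by argo
  have ns: "norm (sgn m) = 1" using mp by (simp add: norm_sgn)
  have ms: "norm (m - sgn m) = 1 - norm m"
  proof -
    have "m - sgn m = (norm m - 1) *\<^sub>R sgn m" using mp
      by (simp add: sgn_div_norm algebra_simps)
    thus ?thesis using ns mle by simp
  qed
  have dr: "r \<le> norm (x - sgn m) \<and> norm (x - sgn m) \<le> 2"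
    if x: "norm x \<le> 1" and xm: "norm (x - m) = \<epsilon>/2" for x
  proof
    have "norm (x - m) \<le> norm (x - sgn m) + norm (sgn m - m)"
      using norm_triangle_ineq[of "x - sgn m" "sgn m - m"] by simp
    hence lo: "norm (x - sgn m) \<ge> \<epsilon>/2 - (1 - norm m)"
      using ms xm by (simp add: norm_minus_commute)
    show "r \<le> norm (x - sgn m)"
    proof (cases "g > 0")
      case True
      then have "\<xi> \<le> 3*g/4" using xi1(3) by simp
      then show ?thesis using lo xy(4) unfolding r_def g_def m_def by argo
    next
      case False
      then have "r = 0" using g0 unfolding r_def g_def by simp
      then show ?thesis by simp
    qed
    show "norm (x - sgn m) \<le> 2"
      using norm_triangle_ineq4[of x "sgn m"] x ns by simp
  qed
  have x1m: "norm (x1 - m) = \<epsilon>/2"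
  proof -
    have "x1 - m = (1/2) *\<^sub>R (x1 - x2)" unfolding m_def by (simp add: algebra_simps flip: scaleR_add_left)
    thus ?thesis using xy(3) by simp
  qed
  have x2m: "norm (x2 - m) = \<epsilon>/2"
  proof -
    have "x2 - m = (- 1/2) *\<^sub>R (x1 - x2)" unfolding m_def by (simp add: algebra_simps flip: scaleR_add_left)
    thus ?thesis using xy(3) by simp
  qed
  have Dr0: "?D r \<ge> 0" using nonneg[OF nontriv r0] .
  have bnd: "norm (l *\<^sub>R x + (1 - l) *\<^sub>R sgn m) \<le> 1 - 2 * (1 - l) * ?D r"
    if x: "norm x \<le> 1" and xm: "norm (x - m) = \<epsilon>/2" for x
  proof -
    have d: "r \<le> norm (x - sgn m)" "norm (x - sgn m) \<le> 2" using dr[OF x xm] by auto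
    have "norm (l *\<^sub>R x + (1 - l) *\<^sub>R sgn m) \<le> 1 - 2 * (1 - l) * ?D (norm (x - sgn m))"
      by (rule conv[OF nontriv x _ refl l(1,2)]) (simp add: ns)
    moreover have "?D r \<le> ?D (norm (x - sgn m))" using mono[OF nontriv r0(1) d] .
    moreover have "0 \<le> 2 * (1 - l)" using l by simp
    ultimately show ?thesis by (smt (verit) mult_left_mono)
  qed
  have k0: "2 * (1 - l) * ?D r \<ge> 0" using l Dr0 by simp
  have "?D (l * \<epsilon>) \<le> l * (1 - norm m) - 2 * (1 - l) * ?D r"
    by (rule core[OF nontriv xy(1,2,3) m_def mp l(3,2) k0 bnd[OF xy(1) x1m] bnd[OF xy(2) x2m]])
  hence main: "?D \<eta> \<le> l * (?De + \<xi>) - 2 * (1 - l) * ?D r"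
    using le xy(4) l unfolding m_def
    by (smt (verit) mult_left_mono)
  have "?D \<eta> / \<eta> \<le> (l * (?De + \<xi>) - 2 * (1 - l) * ?D r) / \<eta>"
    using main ep by (simp add: divide_right_mono)
  also have "\<dots> = ?De / \<epsilon> + \<xi> / \<epsilon> - 2 * ((\<epsilon> - \<eta>) / (\<epsilon> * \<eta>)) * ?D r"
    unfolding l_def using ep by (simp add: field_simps)
  also have "\<xi> / \<epsilon> \<le> \<xi>'" using xi1(1) ep by (simp add: divide_le_eq mult.commute)
  finally show "?D \<eta> / \<eta> \<le> ?De / \<epsilon> - 2 * ((\<epsilon> - \<eta>) / (\<epsilon> * \<eta>)) * ?D ((1/4) * (\<epsilon> / 2 - ?De)) + \<xi>'"
    unfolding r_def by simp
qed

end
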